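(* Let $\Gamma$ be a reduct of $(\mathbb{Z};<)$ with finite relational signature. Then for all $a_1,a_2\in\mathbb{Z}$ at least one of the following holds: (i) there are $r\ge0$ and a finite $S\subseteq\mathbb{Z}$ with $\{a_1,a_2\}\subseteq S$ such that every homomorphism $f$ from $\Gamma[S]$ to $\Gamma$ satisfies $|f(a_1)-f(a_2)|\le r$; (ii) there is a homomorphism $h\colon\Gamma\to\mathbb{Q}.\Gamma$ such that $h(a_1)$ and $h(a_2)$ lie in different copies of $\mathbb{Z}$ in $\mathbb{Q}.\mathbb{Z}$.
   Context: A reduct of $(\mathbb{Z};<)$ is a relational structure with domain $\mathbb{Z}$ whose relations are first-order definable in $(\mathbb{Z};<)$; $\Gamma[S]$ is the induced substructure on $S$. $\mathbb{Q}.\mathbb{Z}=\mathbb{Q}\times\mathbb{Z}$ with the lexicographic order; its copies of $\mathbb{Z}$ are the sets $\{a\}\times\mathbb{Z}$. $\mathbb{Q}.\Gamma$ is the structure on $\mathbb{Q}.\mathbb{Z}$ interpreting each relation symbol of $\Gamma$ by the relation defined over $(\mathbb{Q}.\mathbb{Z};<)$ by a first-order formula defining it over $(\mathbb{Z};<)$. *)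

theory Defs
  imports Complex_Main
begin

datatype fo = FLess nat nat | FEq nat nat | FNeg fo | FConj fo fo | FEx nat fo

fun fv :: "fo \<Rightarrow> nat set" where
  "fv (FLess x y) = {x, y}"
| "fv (FEq x y) = {x, y}"
| "fv (FNeg \<phi>) = fv \<phi>"
| "fv (FConj \<phi> \<psi>) = fv \<phi> \<union> fv \<psi>"
| "fv (FEx x \<phi>) = fv \<phi> - {x}"

fun sat :: "('a \<Rightarrow> 'a \<Rightarrow> bool) \<Rightarrow> fo \<Rightarrow> (nat \<Rightarrow> 'a) \<Rightarrow> bool" where
  "sat lt (FLess x y) e = lt (e x) (e y)"
| "sat lt (FEq x y) e = (e x = e y)"
| "sat lt (FNeg \<phi>) e = (\<not> sat lt \<phi> e)"
| "sat lt (FConj \<phi> \<psi>) e = (sat lt \<phi> e \<and> sat lt \<psi> e)"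
| "sat lt (FEx x \<phi>) e = (\<exists>a. sat lt \<phi> (e(x := a)))"

text \<open>Lexicographic order on Q.Z = Q x Z; the copies of Z are the sets {a} x Z.\<close>
definition qz_less :: "rat \<times> int \<Rightarrow> rat \<times> int \<Rightarrow> bool" where
  "qz_less p q = (fst p < fst q \<or> (fst p = fst q \<and> snd p < snd q))"

text \<open>A finite relational signature of a reduct of (Z;<) is given by a list of
  relation symbols, each with an arity n and a first-order formula over (Z;<)
  with free variables among 0..n-1 defining it. The relation of the symbol (n,phi)
  in Gamma is the set of n-tuples t (lists of length n) with sat (<) phi (nth t);
  in Q.Gamma it is interpreted by the same formula over (Q.Z; qz_less).\<close>
definition wf_sig :: "(nat \<times> fo) list \<Rightarrow> bool" where
  "wf_sig sig = (\<forall>(n, \<phi>) \<in> set sig. fv \<phi> \<subseteq> {..<n})"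

definition hom_sub :: "(nat \<times> fo) list \<Rightarrow> int set \<Rightarrow> (int \<Rightarrow> int) \<Rightarrow> bool" where
  "hom_sub sig S f = (\<forall>(n, \<phi>) \<in> set sig. \<forall>t :: int list.
      length t = n \<and> set t \<subseteq> S \<and> sat (<) \<phi> (nth t) \<longrightarrow> sat (<) \<phi> (nth (map f t)))"

definition hom_QZ :: "(nat \<times> fo) list \<Rightarrow> (int \<Rightarrow> rat \<times> int) \<Rightarrow> bool" where
  "hom_QZ sig h = (\<forall>(n, \<phi>) \<in> set sig. \<forall>t :: int list.
      length t = n \<and> sat (<) \<phi> (nth t) \<longrightarrow> sat qz_less \<phi> (nth (map h t)))"

end

theory Submission
  imports Defs "HOL-Library.Nat_Bijection"
begin


definition cl :: "nat \<Rightarrow> int \<Rightarrow> int" where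
  "cl T v = max (-(int T+1)) (min (int T+1) v)"

definition clamp :: "nat \<Rightarrow> rat \<times> int \<Rightarrow> rat \<times> int \<Rightarrow> int" where
  "clamp T p q = (if fst p = fst q then cl T (snd q - snd p)
     else if fst p < fst q then int T + 1 else -(int T+1))"

definition qz_le :: "rat \<times> int \<Rightarrow> rat \<times> int \<Rightarrow> bool" where
  "qz_le p q = (qz_less p q \<or> p = q)"

lemma clamp_sym: "clamp T q p = - clamp T p q"
  by (auto simp: clamp_def cl_def)

lemma clamp_cl: "T \<le> N \<Longrightarrow> cl T (clamp N p q) = clamp T p q"
  by (auto simp: clamp_def cl_def)

lemma clamp_less: "qz_less p q \<longleftrightarrow> clamp T p q > 0"
  by (cases p; cases q; auto simp: clamp_def cl_def qz_less_def)

lemma clamp_eq: "p = q \<longleftrightarrow> clamp T p q = 0"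
  by (cases p; cases q; auto simp: clamp_def cl_def)

lemma clamp_le: "qz_le p q \<longleftrightarrow> clamp T p q \<ge> 0"
  by (cases p; cases q; auto simp: clamp_def cl_def qz_le_def qz_less_def)

lemma clamp_shift:
  assumes "fst a = fst p" "snd a = snd p + k" "\<bar>k\<bar> \<le> int T" "2*T \<le> M"
  shows "clamp T q a = cl T (clamp M q p + k)"
  using assms by (auto simp: clamp_def cl_def)

lemma clamp_m1: "qz_le p q \<Longrightarrow> clamp T q r = int T+1 \<Longrightarrow> clamp T p r = int T+1"
  by (cases p; cases q; cases r; auto simp: clamp_def cl_def qz_le_def qz_less_def split: if_splits)

lemma clamp_m2: "qz_le q r \<Longrightarrow> clamp T p q = int T+1 \<Longrightarrow> clamp T p r = int T+1"
  by (cases p; cases q; cases r; auto simp: clamp_def cl_def qz_le_def qz_less_def split: if_splits)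

lemma clamp_add: "clamp T p a = int T+1 \<Longrightarrow> clamp T a q = int T+1 \<Longrightarrow> 2*T+1 \<le> M
   \<Longrightarrow> clamp M p q \<ge> 2*int T+2"
  by (cases p; cases q; cases a; auto simp: clamp_def cl_def split: if_splits)

lemma clamp_far: "clamp M p q \<ge> 2*int T+2 \<Longrightarrow> 2*T+1 \<le> M
   \<Longrightarrow> clamp T (fst p, snd p + int T + 1) q = int T+1"
  by (cases p; cases q; auto simp: clamp_def cl_def split: if_splits)

lemma clamp_farA: "\<not>(fst p = fst a \<and> \<bar>snd a - snd p\<bar> \<le> int T) \<Longrightarrow>
   clamp T p a = (if qz_less p a then int T+1 else -(int T+1))"
  by (cases p; cases a; auto simp: clamp_def cl_def qz_less_def)

lemma qz_le_total: "qz_le p q \<or> qz_le q p"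
  by (cases p; cases q; auto simp: qz_le_def qz_less_def)

lemma qz_le_trans: "qz_le p q \<Longrightarrow> qz_le q r \<Longrightarrow> qz_le p r"
  by (cases p; cases q; cases r; auto simp: qz_le_def qz_less_def)

lemma qz_le_refl: "qz_le p p" by (simp add: qz_le_def)

lemma exists_max:
  assumes "finite A" "A \<noteq> {}"
  shows "\<exists>i0\<in>A. \<forall>i\<in>A. qz_le (e i) (e i0)"
  using assms
proof (induction A rule: finite_ne_induct)
  case (singleton x) then show ?case by (auto simp: qz_le_def)
next
  case (insert x F)
  then obtain i0 where i0: "i0 \<in> F" "\<forall>i\<in>F. qz_le (e i) (e i0)" by blast
  show ?case
  proof (cases "qz_le (e x) (e i0)")
    case True then show ?thesis using i0 by auto
  next
    case False then have "qz_le (e i0) (e x)" using qz_le_total by blast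
    then have "\<forall>i\<in>insert x F. qz_le (e i) (e x)" using i0 qz_le_trans qz_le_refl by blast
    then show ?thesis by blast
  qed
qed

lemma exists_min:
  assumes "finite A" "A \<noteq> {}"
  shows "\<exists>i0\<in>A. \<forall>i\<in>A. qz_le (e i0) (e i)"
  using assms
proof (induction A rule: finite_ne_induct)
  case (singleton x) then show ?case by (auto simp: qz_le_def)
next
  case (insert x F)
  then obtain i0 where i0: "i0 \<in> F" "\<forall>i\<in>F. qz_le (e i0) (e i)" by blast
  show ?case
  proof (cases "qz_le (e i0) (e x)")
    case True then show ?thesis using i0 by auto
  next
    case False then have "qz_le (e x) (e i0)" using qz_le_total by blast
    then have "\<forall>i\<in>insert x F. qz_le (e x) (e i)" using i0 qz_le_trans qz_le_refl by blast
    then show ?thesis by blast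
  qed
qed



definition good :: "(rat \<times> int) set \<Rightarrow> bool" where
  "good D = (D \<noteq> {} \<and> (\<forall>p\<in>D. \<forall>k. (fst p, snd p + k) \<in> D))"

definition pattern :: "nat \<Rightarrow> nat set \<Rightarrow> (nat \<Rightarrow> rat \<times> int) \<Rightarrow> (nat \<Rightarrow> rat \<times> int) \<Rightarrow> bool" where
  "pattern N V e e' = (\<forall>i\<in>V. \<forall>j\<in>V. clamp N (e i) (e j) = clamp N (e' i) (e' j))"

lemma step:
  assumes gd: "good D2" and fin: "finite V" and rng: "\<forall>i\<in>V. e' i \<in> D2"
    and pat: "pattern (2*T+2) V e e'"
  shows "\<exists>b\<in>D2. \<forall>i\<in>V. clamp T (e i) a = clamp T (e' i) b"
proof -
  define M where "M = 2*T+2"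
  have patM: "\<And>i j. i \<in> V \<Longrightarrow> j \<in> V \<Longrightarrow> clamp M (e i) (e j) = clamp M (e' i) (e' j)"
    using pat by (auto simp: pattern_def M_def)
  have shD: "\<And>p k. p \<in> D2 \<Longrightarrow> (fst p, snd p + k) \<in> D2" using gd by (auto simp: good_def)
  show ?thesis
  proof (cases "\<exists>i\<in>V. fst (e i) = fst a \<and> \<bar>snd a - snd (e i)\<bar> \<le> int T")
    case True
    then obtain i where i: "i \<in> V" "fst (e i) = fst a" "\<bar>snd a - snd (e i)\<bar> \<le> int T" by blast
    define k where "k = snd a - snd (e i)"
    define b where "b = (fst (e' i), snd (e' i) + k)"
    have "b \<in> D2" using shD rng i(1) by (simp add: b_def)
    moreover have "\<forall>j\<in>V. clamp T (e j) a = clamp T (e' j) b"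
    proof
      fix j assume j: "j \<in> V"
      have "clamp T (e j) a = cl T (clamp M (e j) (e i) + k)"
        by (rule clamp_shift) (use i in \<open>auto simp: k_def M_def\<close>)
      also have "\<dots> = cl T (clamp M (e' j) (e' i) + k)" using patM i(1) j by simp
      also have "\<dots> = clamp T (e' j) b"
        by (rule clamp_shift[symmetric]) (use i in \<open>auto simp: k_def M_def b_def\<close>)
      finally show "clamp T (e j) a = clamp T (e' j) b" .
    qed
    ultimately show ?thesis by blast
  next
    case False
    have hA: "\<And>i. i \<in> V \<Longrightarrow> clamp T (e i) a = (if qz_less (e i) a then int T+1 else -(int T+1))"
      using False clamp_farA by blast
    define L where "L = {i\<in>V. qz_less (e i) a}"
    show ?thesis
    proof (cases "L = {}")
      case False
      have "finite L" using fin by (simp add: L_def)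
      then obtain i0 where i0: "i0 \<in> L" "\<forall>i\<in>L. qz_le (e i) (e i0)"
        using exists_max[OF _ False] by blast
      have i0V: "i0 \<in> V" and i0a: "clamp T (e i0) a = int T+1" using i0 hA by (auto simp: L_def)
      define b where "b = (fst (e' i0), snd (e' i0) + int T + 1)"
      have "b \<in> D2" using shD rng i0V by (simp add: b_def add.assoc)
      moreover have "\<forall>i\<in>V. clamp T (e i) a = clamp T (e' i) b"
      proof
        fix i assume iV: "i \<in> V"
        show "clamp T (e i) a = clamp T (e' i) b"
        proof (cases "i \<in> L")
          case True
          then have "qz_le (e i) (e i0)" using i0 by blast
          then have "clamp M (e i) (e i0) \<ge> 0" using clamp_le by blast
          then have "clamp M (e' i) (e' i0) \<ge> 0" using patM iV i0V by simp
          then have le: "qz_le (e' i) (e' i0)" using clamp_le by blast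
          have "clamp T (e' i0) b = int T+1" by (simp add: b_def clamp_def cl_def)
          then have "clamp T (e' i) b = int T+1" using clamp_m1[OF le] by blast
          then show ?thesis using hA iV True by (simp add: L_def)
        next
          case False
          then have ei: "clamp T (e i) a = -(int T+1)" using hA iV by (simp add: L_def)
          then have "clamp T a (e i) = int T+1" using clamp_sym[of T a "e i"] by simp
          then have "clamp M (e i0) (e i) \<ge> 2*int T+2" using clamp_add[OF i0a] by (simp add: M_def)
          then have "clamp M (e' i0) (e' i) \<ge> 2*int T+2" using patM iV i0V by simp
          then have "clamp T (fst (e' i0), snd (e' i0) + int T + 1) (e' i) = int T+1"
            using clamp_far[where M=M and p="e' i0" and q="e' i" and T=T] by (simp add: M_def)
          then have "clamp T b (e' i) = int T+1" by (simp add: b_def)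
          then show ?thesis using ei clamp_sym[of T "e' i" b] by simp
        qed
      qed
      ultimately show ?thesis by blast
    next
      case Lempty: True
      show ?thesis
      proof (cases "V = {}")
        case True
        then show ?thesis using gd by (auto simp: good_def)
      next
        case False
        then obtain j0 where j0: "j0 \<in> V" "\<forall>i\<in>V. qz_le (e j0) (e i)"
          using exists_min[OF fin] by blast
        define b where "b = (fst (e' j0), snd (e' j0) - (int T + 1))"
        have "b \<in> D2" unfolding b_def diff_conv_add_uminus by (rule shD) (use rng j0 in auto)
        moreover have "\<forall>i\<in>V. clamp T (e i) a = clamp T (e' i) b"
        proof
          fix i assume iV: "i \<in> V"
          have ei: "clamp T (e i) a = -(int T+1)" using hA iV Lempty by (auto simp: L_def)
          have "qz_le (e j0) (e i)" using j0 iV by blast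
          then have "clamp M (e j0) (e i) \<ge> 0" using clamp_le by blast
          then have "clamp M (e' j0) (e' i) \<ge> 0" using patM iV j0 by simp
          then have le: "qz_le (e' j0) (e' i)" using clamp_le by blast
          have "clamp T b (e' j0) = int T+1" by (simp add: b_def clamp_def cl_def)
          then have "clamp T b (e' i) = int T+1" using clamp_m2[OF le] by blast
          then show "clamp T (e i) a = clamp T (e' i) b" using ei clamp_sym[of T "e' i" b] by simp
        qed
        ultimately show ?thesis by blast
      qed
    qed
  qed
qed



fun satD :: "(rat \<times> int) set \<Rightarrow> fo \<Rightarrow> (nat \<Rightarrow> rat \<times> int) \<Rightarrow> bool" where
  "satD D (FLess x y) e = qz_less (e x) (e y)"
| "satD D (FEq x y) e = (e x = e y)"
| "satD D (FNeg \<phi>) e = (\<not> satD D \<phi> e)"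
| "satD D (FConj \<phi> \<psi>) e = (satD D \<phi> e \<and> satD D \<psi> e)"
| "satD D (FEx x \<phi>) e = (\<exists>a\<in>D. satD D \<phi> (e(x := a)))"

fun qd :: "fo \<Rightarrow> nat" where
  "qd (FLess x y) = 0"
| "qd (FEq x y) = 0"
| "qd (FNeg \<phi>) = qd \<phi>"
| "qd (FConj \<phi> \<psi>) = max (qd \<phi>) (qd \<psi>)"
| "qd (FEx x \<phi>) = Suc (qd \<phi>)"

fun th :: "nat \<Rightarrow> nat" where
  "th 0 = 0"
| "th (Suc d) = 2 * th d + 2"

lemma th_mono: "d \<le> d' \<Longrightarrow> th d \<le> th d'"
  by (rule lift_Suc_mono_le[of th]) auto

lemma sat_qz: "sat qz_less \<phi> e = satD UNIV \<phi> e"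
  by (induction \<phi> arbitrary: e) auto

definition emb :: "int \<Rightarrow> rat \<times> int" where "emb z = (0, z)"

lemma sat_int: "sat (<) \<phi> e = satD (range emb) \<phi> (emb \<circ> e)"
proof (induction \<phi> arbitrary: e)
  case (FEx x \<phi>)
  have "\<And>a. sat (<) \<phi> (e(x := a)) = satD (range emb) \<phi> ((emb \<circ> e)(x := emb a))"
  proof -
    fix a
    have eq: "emb \<circ> (e(x:=a)) = (emb\<circ>e)(x := emb a)" by (rule ext) simp
    show "sat (<) \<phi> (e(x := a)) = satD (range emb) \<phi> ((emb \<circ> e)(x := emb a))"
      using FEx[of "e(x:=a)"] unfolding eq .
  qed
  then have "(\<exists>a. sat (<) \<phi> (e(x := a))) = (\<exists>a. satD (range emb) \<phi> ((emb \<circ> e)(x := emb a)))"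
    by simp
  then show ?case by (simp only: sat.simps satD.simps) blast
qed (auto simp: emb_def qz_less_def)

lemma pattern_mono: "T \<le> N \<Longrightarrow> pattern N V e e' \<Longrightarrow> pattern T V e e'"
  unfolding pattern_def by (metis clamp_cl)

lemma pattern_sub: "W \<subseteq> V \<Longrightarrow> pattern N V e e' \<Longrightarrow> pattern N W e e'"
  unfolding pattern_def by blast

lemma pattern_sym: "pattern N V e e' \<Longrightarrow> pattern N V e' e"
  unfolding pattern_def by auto

lemma pattern_ext:
  assumes "pattern (2*T+2) V e e'" "x \<notin> V" "\<forall>i\<in>V. clamp T (e i) a = clamp T (e' i) b"
  shows "pattern T (insert x V) (e(x:=a)) (e'(x:=b))"
proof -
  have p: "pattern T V e e'" using pattern_mono[OF _ assms(1)] by simp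
  show ?thesis unfolding pattern_def
  proof (intro ballI)
    fix i j assume i: "i \<in> insert x V" and j: "j \<in> insert x V"
    show "clamp T ((e(x := a)) i) ((e(x := a)) j) = clamp T ((e'(x := b)) i) ((e'(x := b)) j)"
    proof (cases "i = x")
      case True
      show ?thesis
      proof (cases "j = x")
        case True then show ?thesis using \<open>i = x\<close> by (simp add: clamp_def cl_def)
      next
        case False
        then have "j \<in> V" using j by simp
        then show ?thesis using \<open>i = x\<close> False assms(3) clamp_sym[of T a "e j"] clamp_sym[of T b "e' j"]
          by simp
      qed
    next
      case False
      then have iV: "i \<in> V" using i by simp
      show ?thesis
      proof (cases "j = x")
        case True then show ?thesis using False iV assms(3) by simp
      next
        case jx: False
        then have "j \<in> V" using j by simp
        then show ?thesis using False jx iV p by (simp add: pattern_def)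
      qed
    qed
  qed
qed

lemma EF:
  "good D1 \<Longrightarrow> good D2 \<Longrightarrow> fv \<phi> \<subseteq> V \<Longrightarrow> finite V \<Longrightarrow> \<forall>i\<in>V. e i \<in> D1 \<Longrightarrow>
   \<forall>i\<in>V. e' i \<in> D2 \<Longrightarrow> pattern N V e e' \<Longrightarrow> th (qd \<phi>) \<le> N \<Longrightarrow>
   satD D1 \<phi> e = satD D2 \<phi> e'"
proof (induction \<phi> arbitrary: V e e' N D1 D2)
  case (FLess x y)
  then have "clamp N (e x) (e y) = clamp N (e' x) (e' y)" by (auto simp: pattern_def)
  then show ?case using clamp_less[of "e x" "e y" N] clamp_less[of "e' x" "e' y" N] by simp
next
  case (FEq x y)
  then have "clamp N (e x) (e y) = clamp N (e' x) (e' y)" by (auto simp: pattern_def)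
  then show ?case using clamp_eq[of "e x" "e y" N] clamp_eq[of "e' x" "e' y" N] by simp
next
  case (FNeg \<phi>)
  then show ?case by simp
next
  case (FConj \<phi> \<psi>)
  have "th (qd \<phi>) \<le> N" "th (qd \<psi>) \<le> N"
    using FConj.prems(8) th_mono[of "qd \<phi>" "max (qd \<phi>) (qd \<psi>)"] th_mono[of "qd \<psi>" "max (qd \<phi>) (qd \<psi>)"]
    by auto
  then show ?case using FConj.IH[of D1 D2 V e e' N] FConj.prems by auto
next
  case (FEx x \<phi>)
  define T where "T = th (qd \<phi>)"
  define V' where "V' = V - {x}"
  have finV': "finite (insert x V')" using FEx.prems by (simp add: V'_def)
  have xV': "x \<notin> V'" by (simp add: V'_def)
  have pat: "pattern (2*T+2) V' e e'"
    using pattern_mono[OF _ pattern_sub[OF _ FEx.prems(7)], of "2*T+2" V'] FEx.prems(8)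
    by (simp add: T_def V'_def)
  have fvs: "fv \<phi> \<subseteq> insert x V'" using FEx.prems(3) by (auto simp: V'_def)
  show ?case
  proof
    assume "satD D1 (FEx x \<phi>) e"
    then obtain a where a: "a \<in> D1" "satD D1 \<phi> (e(x := a))" by auto
    obtain b where b: "b \<in> D2" "\<forall>i\<in>V'. clamp T (e i) a = clamp T (e' i) b"
      using step[OF FEx.prems(2) _ _ pat, of a] FEx.prems(4,6) by (auto simp: V'_def)
    have patT: "pattern T (insert x V') (e(x:=a)) (e'(x:=b))" by (rule pattern_ext[OF pat xV' b(2)])
    have r1: "\<forall>i\<in>insert x V'. (e(x:=a)) i \<in> D1" and r2: "\<forall>i\<in>insert x V'. (e'(x:=b)) i \<in> D2"
      using a b FEx.prems(5,6) by (auto simp: V'_def)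
    have "satD D1 \<phi> (e(x := a)) = satD D2 \<phi> (e'(x := b))"
      by (rule FEx.IH[OF FEx.prems(1,2) fvs finV' r1 r2 patT]) (simp add: T_def)
    then show "satD D2 (FEx x \<phi>) e'" using a b by auto
  next
    assume "satD D2 (FEx x \<phi>) e'"
    then obtain b where b: "b \<in> D2" "satD D2 \<phi> (e'(x := b))" by auto
    obtain a where a: "a \<in> D1" "\<forall>i\<in>V'. clamp T (e' i) b = clamp T (e i) a"
      using step[OF FEx.prems(1) _ _ pattern_sym[OF pat], of b] FEx.prems(4,5) by (auto simp: V'_def)
    have patT: "pattern T (insert x V') (e(x:=a)) (e'(x:=b))"
      by (rule pattern_ext[OF pat xV']) (use a in auto)
    have r1: "\<forall>i\<in>insert x V'. (e(x:=a)) i \<in> D1" and r2: "\<forall>i\<in>insert x V'. (e'(x:=b)) i \<in> D2"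
      using a b FEx.prems(5,6) by (auto simp: V'_def)
    have "satD D1 \<phi> (e(x := a)) = satD D2 \<phi> (e'(x := b))"
      by (rule FEx.IH[OF FEx.prems(1,2) fvs finV' r1 r2 patT]) (simp add: T_def)
    then show "satD D1 (FEx x \<phi>) e" using a b by auto
  qed
qed



definition tpos :: "(nat \<Rightarrow> int) \<Rightarrow> nat set \<Rightarrow> bool" where
  "tpos u I = (\<forall>B. finite {k\<in>I. u k \<le> B})"
definition tneg :: "(nat \<Rightarrow> int) \<Rightarrow> nat set \<Rightarrow> bool" where
  "tneg u I = (\<forall>B. finite {k\<in>I. B \<le> u k})"
definition rel :: "rat \<times> int \<Rightarrow> rat \<times> int \<Rightarrow> (nat \<Rightarrow> int) \<Rightarrow> nat set \<Rightarrow> bool" where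
  "rel p q u I = (if fst p = fst q then (\<forall>k\<in>I. u k = snd q - snd p)
      else if fst p < fst q then tpos u I else tneg u I)"
definition Inv :: "(nat \<Rightarrow> int \<Rightarrow> int) \<Rightarrow> int set \<Rightarrow> (int \<Rightarrow> rat \<times> int) \<Rightarrow> nat set \<Rightarrow> bool" where
  "Inv f S h I = (infinite I \<and> (\<forall>x\<in>S. \<forall>y\<in>S. rel (h x) (h y) (\<lambda>k. f k y - f k x) I))"
definition classified :: "(nat \<Rightarrow> int) \<Rightarrow> nat set \<Rightarrow> bool" where
  "classified u J = ((\<exists>d. \<forall>k\<in>J. u k = d) \<or> tpos u J \<or> tneg u J)"

lemma tpos_sub: assumes "J \<subseteq> I" "tpos u I" shows "tpos u J"
  unfolding tpos_def
proof
  fix B have "{k\<in>J. u k \<le> B} \<subseteq> {k\<in>I. u k \<le> B}" using assms(1) by auto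
  then show "finite {k\<in>J. u k \<le> B}" using assms(2) finite_subset unfolding tpos_def by blast
qed
lemma tneg_sub: assumes "J \<subseteq> I" "tneg u I" shows "tneg u J"
  unfolding tneg_def
proof
  fix B have "{k\<in>J. B \<le> u k} \<subseteq> {k\<in>I. B \<le> u k}" using assms(1) by auto
  then show "finite {k\<in>J. B \<le> u k}" using assms(2) finite_subset unfolding tneg_def by blast
qed
lemma rel_sub: "J \<subseteq> I \<Longrightarrow> rel p q u I \<Longrightarrow> rel p q u J"
  unfolding rel_def using tpos_sub tneg_sub by (auto split: if_splits)
lemma classified_sub: "J \<subseteq> I \<Longrightarrow> classified u I \<Longrightarrow> classified u J"
  unfolding classified_def using tpos_sub tneg_sub by blast
lemma Inv_sub: "J \<subseteq> I \<Longrightarrow> infinite J \<Longrightarrow> Inv f S h I \<Longrightarrow> Inv f S h J"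
  unfolding Inv_def using rel_sub by blast
lemma Inv_cong: "Inv f S h I \<Longrightarrow> \<forall>x\<in>S. h x = h' x \<Longrightarrow> Inv f S h' I"
  unfolding Inv_def by simp

lemma tpos_notconst: "infinite J \<Longrightarrow> tpos u J \<Longrightarrow> \<not>(\<forall>k\<in>J. u k = d)"
proof
  assume "infinite J" "tpos u J" "\<forall>k\<in>J. u k = d"
  then have "{k\<in>J. u k \<le> d} = J" by auto
  then show False using \<open>infinite J\<close> \<open>tpos u J\<close> unfolding tpos_def by metis
qed

lemma tpos_nottneg: "infinite J \<Longrightarrow> tpos u J \<Longrightarrow> \<not> tneg u J"
proof
  assume "infinite J" "tpos u J" "tneg u J"
  then have "finite ({k\<in>J. u k \<le> 0} \<union> {k\<in>J. 0 \<le> u k})" unfolding tpos_def tneg_def by blast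
  moreover have "{k\<in>J. u k \<le> 0} \<union> {k\<in>J. 0 \<le> u k} = J" by auto
  ultimately show False using \<open>infinite J\<close> by simp
qed

lemma tpos_neg: "tpos (\<lambda>k. - u k) J = tneg u J"
proof -
  have e: "\<And>B. {k\<in>J. - u k \<le> B} = {k\<in>J. -B \<le> u k}" by auto
  show ?thesis unfolding tpos_def tneg_def e
  proof
    assume a: "\<forall>B. finite {k \<in> J. - B \<le> u k}"
    show "\<forall>B. finite {k \<in> J. B \<le> u k}"
    proof
      fix B show "finite {k \<in> J. B \<le> u k}" using a[rule_format, of "-B"] by simp
    qed
  qed simp
qed

lemma tneg_neg: "tneg (\<lambda>k. - u k) J = tpos u J"
  using tpos_neg[of "\<lambda>k. - u k" J] by simp

lemma tpos_add: "tpos u J \<Longrightarrow> tpos v J \<Longrightarrow> tpos (\<lambda>k. u k + v k) J"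
  unfolding tpos_def
proof
  fix B assume u: "\<forall>B. finite {k \<in> J. u k \<le> B}" and v: "\<forall>B. finite {k \<in> J. v k \<le> B}"
  have "{k \<in> J. u k + v k \<le> B} \<subseteq> {k\<in>J. v k \<le> 0} \<union> {k\<in>J. u k \<le> B}" by auto
  then show "finite {k \<in> J. u k + v k \<le> B}" using u v by (meson finite_Un finite_subset)
qed

lemma rel_cong: "rel p q u J \<Longrightarrow> (\<forall>k\<in>J. u k = v k) \<Longrightarrow> rel p q v J"
proof -
  assume r: "rel p q u J" and e: "\<forall>k\<in>J. u k = v k"
  have "\<And>B. {k\<in>J. u k \<le> B} = {k\<in>J. v k \<le> B}" "\<And>B. {k\<in>J. B \<le> u k} = {k\<in>J. B \<le> v k}"
    using e by auto
  then show ?thesis using r e unfolding rel_def tpos_def tneg_def by (auto split: if_splits)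
qed

lemma rel_sym: "rel p q u J \<Longrightarrow> rel q p (\<lambda>k. - u k) J"
  unfolding rel_def using tpos_neg tneg_neg by (auto split: if_splits)

lemma rel_shift: "rel p q w J \<Longrightarrow> rel q (fst p, snd p + d) (\<lambda>k. d - w k) J"
proof -
  assume r: "rel p q w J"
  have t1: "tpos w J \<Longrightarrow> tneg (\<lambda>k. d - w k) J"
  proof -
    assume "tpos w J"
    show ?thesis unfolding tneg_def
    proof
      fix B
      have "{k\<in>J. B \<le> d - w k} = {k\<in>J. w k \<le> d - B}" by auto
      then show "finite {k\<in>J. B \<le> d - w k}" using \<open>tpos w J\<close> unfolding tpos_def by simp
    qed
  qed
  have t2: "tneg w J \<Longrightarrow> tpos (\<lambda>k. d - w k) J"
  proof -
    assume "tneg w J"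
    show ?thesis unfolding tpos_def
    proof
      fix B
      have "{k\<in>J. d - w k \<le> B} = {k\<in>J. d - B \<le> w k}" by auto
      then show "finite {k\<in>J. d - w k \<le> B}" using \<open>tneg w J\<close> unfolding tneg_def by simp
    qed
  qed
  show ?thesis using r t1 t2 unfolding rel_def by (auto split: if_splits)
qed

lemma rel_tpos: "infinite J \<Longrightarrow> rel p q w J \<Longrightarrow> tpos w J \<Longrightarrow> fst p < fst q"
  unfolding rel_def using tpos_notconst[of J w] tpos_nottneg[of J w] by (auto split: if_splits)

lemma classify1:
  assumes "infinite I"
  shows "\<exists>J\<subseteq>I. infinite J \<and> classified u J"
proof (cases "\<exists>d. infinite {k\<in>I. u k = d}")
  case True
  then obtain d where "infinite {k\<in>I. u k = d}" by blast
  then show ?thesis unfolding classified_def by (intro exI[of _ "{k\<in>I. u k = d}"]) auto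
next
  case False
  then have fd: "\<And>d. finite {k\<in>I. u k = d}" by blast
  show ?thesis
  proof (cases "infinite {k\<in>I. 0 \<le> u k}")
    case True
    have "tpos u {k\<in>I. 0 \<le> u k}" unfolding tpos_def
    proof
      fix B
      have "{k \<in> {k \<in> I. 0 \<le> u k}. u k \<le> B} \<subseteq> (\<Union>d\<in>{0..B}. {k\<in>I. u k = d})" by auto
      then show "finite {k \<in> {k \<in> I. 0 \<le> u k}. u k \<le> B}"
        using fd by (meson finite_UN_I finite_atLeastAtMost_int finite_subset)
    qed
    then show ?thesis using True unfolding classified_def
      by (intro exI[of _ "{k\<in>I. 0 \<le> u k}"]) auto
  next
    case False
    have "I = {k\<in>I. 0 \<le> u k} \<union> {k\<in>I. u k < 0}" by auto
    then have inf: "infinite {k\<in>I. u k < 0}" using False assms by (metis finite_Un)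
    have "tneg u {k\<in>I. u k < 0}" unfolding tneg_def
    proof
      fix B
      have "{k \<in> {k \<in> I. u k < 0}. B \<le> u k} \<subseteq> (\<Union>d\<in>{B..0}. {k\<in>I. u k = d})" by auto
      then show "finite {k \<in> {k \<in> I. u k < 0}. B \<le> u k}"
        using fd by (meson finite_UN_I finite_atLeastAtMost_int finite_subset)
    qed
    then show ?thesis using inf unfolding classified_def
      by (intro exI[of _ "{k\<in>I. u k < 0}"]) auto
  qed
qed

lemma classify:
  assumes "finite A" "infinite I"
  shows "\<exists>J\<subseteq>I. infinite J \<and> (\<forall>x\<in>A. classified (u x) J)"
  using assms
proof (induction A rule: finite_induct)
  case empty then show ?case by blast
next
  case (insert x F)
  then obtain J1 where J1: "J1 \<subseteq> I" "infinite J1" "\<forall>y\<in>F. classified (u y) J1" by blast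
  obtain J2 where J2: "J2 \<subseteq> J1" "infinite J2" "classified (u x) J2" using classify1[OF J1(2)] by blast
  have "\<forall>y\<in>insert x F. classified (u y) J2" using J1(3) J2 classified_sub by blast
  then show ?case using J1 J2 by blast
qed

lemma sep_rat:
  fixes A B :: "rat set"
  assumes "finite A" "finite B" "\<forall>a\<in>A. \<forall>b\<in>B. a < b"
  shows "\<exists>q. (\<forall>a\<in>A. a < q) \<and> (\<forall>b\<in>B. q < b)"
proof (cases "A = {}")
  case True
  show ?thesis
  proof (cases "B = {}")
    case True then show ?thesis using \<open>A = {}\<close> by simp
  next
    case False
    have "\<forall>b\<in>B. Min B - 1 < b"
    proof
      fix b assume "b \<in> B" then have "Min B \<le> b" using assms(2) by simp
      then show "Min B - 1 < b" by linarith
    qed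
    then show ?thesis using \<open>A = {}\<close> by blast
  qed
next
  case Ane: False
  show ?thesis
  proof (cases "B = {}")
    case True
    have "\<forall>a\<in>A. a < Max A + 1"
    proof
      fix a assume "a \<in> A" then have "a \<le> Max A" using assms(1) by simp
      then show "a < Max A + 1" by linarith
    qed
    then show ?thesis using True by blast
  next
    case False
    have "Max A \<in> A" "Min B \<in> B" using assms(1,2) Ane False by simp_all
    then have lt: "Max A < Min B" using assms(3) by blast
    have "\<forall>a\<in>A. a < (Max A + Min B)/2"
    proof
      fix a assume "a \<in> A" then have "a \<le> Max A" using assms(1) by simp
      then have "2*a < Max A + Min B" using lt by linarith
      then show "a < (Max A + Min B)/2" by (simp add: field_simps)
    qed
    moreover have "\<forall>b\<in>B. (Max A + Min B)/2 < b"
    proof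
      fix b assume "b \<in> B" then have "Min B \<le> b" using assms(2) by simp
      then have "Max A + Min B < 2*b" using lt by linarith
      then show "(Max A + Min B)/2 < b" by (simp add: field_simps)
    qed
    ultimately show ?thesis by blast
  qed
qed

lemma step2:
  assumes inv: "Inv f S h I" and fin: "finite S" and z: "z \<notin> S"
  shows "\<exists>b J. J \<subseteq> I \<and> Inv f (insert z S) (h(z:=b)) J"
proof -
  define u where "u x = (\<lambda>k. f k z - f k x)" for x
  have infI: "infinite I" using inv by (simp add: Inv_def)
  obtain J where J: "J \<subseteq> I" "infinite J" "\<forall>x\<in>S. classified (u x) J"
    using classify[OF fin infI] by blast
  have invJ: "\<forall>x\<in>S. \<forall>y\<in>S. rel (h x) (h y) (\<lambda>k. f k y - f k x) J"
    using Inv_sub[OF J(1,2) inv] by (simp add: Inv_def)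
  have suff: "Inv f (insert z S) (h(z:=b)) J" if b: "\<forall>x\<in>S. rel (h x) b (u x) J" for b
  proof -
    have "rel (h' x) (h' y) (\<lambda>k. f k y - f k x) J" if "h' = h(z:=b)" "x \<in> insert z S" "y \<in> insert z S" for x y h'
    proof (cases "x = z")
      case True
      show ?thesis
      proof (cases "y = z")
        case True then show ?thesis using \<open>x = z\<close> that by (simp add: rel_def)
      next
        case False
        then have yS: "y \<in> S" using that by simp
        have "rel b (h y) (\<lambda>k. - u y k) J" using rel_sym b yS by blast
        then show ?thesis using that True False z yS by (simp add: u_def)
      qed
    next
      case False
      then have xS: "x \<in> S" using that by simp
      show ?thesis
      proof (cases "y = z")
        case True then show ?thesis using that False b xS by (simp add: u_def)
      next
        case yz: False
        then have yS: "y \<in> S" using that by simp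
        then show ?thesis using invJ xS that False yz z by auto
      qed
    qed
    then show ?thesis using J(2) by (simp add: Inv_def)
  qed
  show ?thesis
  proof (cases "\<exists>x0\<in>S. \<exists>d. \<forall>k\<in>J. u x0 k = d")
    case True
    then obtain x0 d where x0: "x0 \<in> S" "\<forall>k\<in>J. u x0 k = d" by blast
    define b where "b = (fst (h x0), snd (h x0) + d)"
    have "\<forall>y\<in>S. rel (h y) b (u y) J"
    proof
      fix y assume yS: "y \<in> S"
      have "rel (h y) b (\<lambda>k. d - (f k y - f k x0)) J"
        unfolding b_def by (rule rel_shift) (use invJ x0 yS in blast)
      then show "rel (h y) b (u y) J" by (rule rel_cong) (use x0 in \<open>auto simp: u_def\<close>)
    qed
    then show ?thesis using suff J(1) by blast
  next
    case False
    have tt: "\<forall>x\<in>S. tpos (u x) J \<or> tneg (u x) J"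
    proof
      fix x assume "x \<in> S"
      then show "tpos (u x) J \<or> tneg (u x) J" using J(3) False unfolding classified_def by blast
    qed
    define L where "L = {x\<in>S. tpos (u x) J}"
    define U where "U = {x\<in>S. \<not> tpos (u x) J}"
    have lu: "\<forall>a\<in>fst ` h ` L. \<forall>c\<in>fst ` h ` U. a < c"
    proof (intro ballI)
      fix a c assume "a \<in> fst ` h ` L" "c \<in> fst ` h ` U"
      then obtain x y where xy: "x \<in> L" "y \<in> U" "a = fst (h x)" "c = fst (h y)" by blast
      have "tneg (u y) J" using xy tt by (auto simp: U_def)
      then have "tpos (\<lambda>k. - u y k) J" using tpos_neg by blast
      moreover have "tpos (u x) J" using xy(1) by (simp add: L_def)
      ultimately have "tpos (\<lambda>k. u x k + - u y k) J" using tpos_add[of "u x" J] by blast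
      then have "tpos (\<lambda>k. f k y - f k x) J" by (simp add: u_def)
      moreover have "x \<in> S" "y \<in> S" using xy by (auto simp: L_def U_def)
      ultimately have "fst (h x) < fst (h y)" using rel_tpos[OF J(2), of "h x" "h y"] invJ by blast
      then show "a < c" using xy by simp
    qed
    obtain q where q: "\<forall>a\<in>fst ` h ` L. a < q" "\<forall>c\<in>fst ` h ` U. q < c"
      using sep_rat[OF _ _ lu] fin by (auto simp: L_def U_def)
    have "\<forall>x\<in>S. rel (h x) (q, 0) (u x) J"
    proof
      fix x assume xS: "x \<in> S"
      show "rel (h x) (q, 0) (u x) J"
      proof (cases "x \<in> L")
        case True then show ?thesis using q(1) by (auto simp: rel_def L_def)
      next
        case False
        then have "x \<in> U" "tneg (u x) J" using xS tt by (auto simp: L_def U_def)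
        then show ?thesis using q(2) by (auto simp: rel_def)
      qed
    qed
    then show ?thesis using suff J(1) by blast
  qed
qed



definition Sm :: "nat \<Rightarrow> int set" where "Sm m = int_decode ` {..<m}"

primrec st :: "(nat \<Rightarrow> int \<Rightarrow> int) \<Rightarrow> nat \<Rightarrow> (int \<Rightarrow> rat \<times> int) \<times> nat set" where
  "st f 0 = ((\<lambda>_. (0,0)), UNIV)"
| "st f (Suc m) = (SOME p. snd p \<subseteq> snd (st f m) \<and> Inv f (Sm (Suc m)) (fst p) (snd p)
      \<and> (\<forall>x\<in>Sm m. fst p x = fst (st f m) x))"

lemma Sm_Suc: "Sm (Suc m) = insert (int_decode m) (Sm m)"
  by (simp add: Sm_def lessThan_Suc)

lemma Sm_notin: "int_decode m \<notin> Sm m"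
proof
  assume "int_decode m \<in> Sm m"
  then obtain j where "j < m" "int_decode m = int_decode j" by (auto simp: Sm_def)
  then have "int_encode (int_decode m) = int_encode (int_decode j)" by simp
  then show False using \<open>j < m\<close> by simp
qed

lemma Sm_fin: "finite (Sm m)" by (simp add: Sm_def)

lemma Sm_mono: "m \<le> n \<Longrightarrow> Sm m \<subseteq> Sm n" by (auto simp: Sm_def)

lemma Sm_cover:
  assumes "finite T" shows "\<exists>m. T \<subseteq> Sm m"
proof -
  define m where "m = Suc (Max (int_encode ` T))"
  have "T \<subseteq> Sm m"
  proof
    fix x assume "x \<in> T"
    then have "int_encode x \<le> Max (int_encode ` T)" using assms by simp
    then have "int_encode x < m" by (simp add: m_def)
    then show "x \<in> Sm m" unfolding Sm_def by (metis image_eqI int_encode_inverse lessThan_iff)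
  qed
  then show ?thesis by blast
qed

lemma st_step:
  assumes "Inv f (Sm m) (fst (st f m)) (snd (st f m))"
  shows "snd (st f (Suc m)) \<subseteq> snd (st f m) \<and> Inv f (Sm (Suc m)) (fst (st f (Suc m))) (snd (st f (Suc m)))
      \<and> (\<forall>x\<in>Sm m. fst (st f (Suc m)) x = fst (st f m) x)"
proof -
  obtain b J where bJ: "J \<subseteq> snd (st f m)" "Inv f (insert (int_decode m) (Sm m)) ((fst (st f m))(int_decode m := b)) J"
    using step2[OF assms Sm_fin Sm_notin] by blast
  have ex: "\<exists>p. snd p \<subseteq> snd (st f m) \<and> Inv f (Sm (Suc m)) (fst p) (snd p)
      \<and> (\<forall>x\<in>Sm m. fst p x = fst (st f m) x)"
    apply (rule exI[of _ "((fst (st f m))(int_decode m := b), J)"])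
    using bJ Sm_notin[of m] by (auto simp: Sm_Suc)
  show ?thesis unfolding st.simps(2) by (rule someI_ex[OF ex])
qed

lemma st_inv: "Inv f (Sm m) (fst (st f m)) (snd (st f m))"
proof (induction m)
  case 0 then show ?case by (simp add: Inv_def Sm_def)
next
  case (Suc m) then show ?case using st_step by blast
qed

lemma st_agree:
  assumes "m \<le> m'" "x \<in> Sm m" shows "fst (st f m') x = fst (st f m) x"
  using assms(1)
proof (induction rule: dec_induct)
  case base then show ?case by simp
next
  case (step n)
  have "x \<in> Sm n" using Sm_mono[OF step(1)] assms(2) by blast
  then show ?case using st_step[OF st_inv] step by simp
qed

definition H :: "(nat \<Rightarrow> int \<Rightarrow> int) \<Rightarrow> int \<Rightarrow> rat \<times> int" where
  "H f x = fst (st f (Suc (int_encode x))) x"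

lemma H_agree: "x \<in> Sm m \<Longrightarrow> fst (st f m) x = H f x"
proof -
  assume "x \<in> Sm m"
  then obtain j where j: "j < m" "x = int_decode j" by (auto simp: Sm_def)
  have "x \<in> Sm (Suc j)" using j by (simp add: Sm_Suc)
  then have "fst (st f m) x = fst (st f (Suc j)) x" using st_agree[of "Suc j" m] j by simp
  then show ?thesis using j by (simp add: H_def)
qed

lemma H_inv: "Inv f (Sm m) (H f) (snd (st f m))"
  using Inv_cong[OF st_inv] H_agree by blast

lemma good_emb: "good (range emb)"
  unfolding good_def emb_def by auto

lemma good_UNIV: "good UNIV"
  unfolding good_def by auto



lemma infinite_avoid:
  fixes I :: "nat set"
  assumes "infinite I" "finite X"
  shows "\<exists>k\<in>I. k \<notin> X \<and> m \<le> k"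
proof -
  have "infinite (I - (X \<union> {..<m}))" using assms by simp
  then obtain k where "k \<in> I - (X \<union> {..<m})" by (meson finite.emptyI rev_finite_subset subsetI)
  then show ?thesis by auto
qed

theorem mainTheorem7:
  fixes sig :: "(nat \<times> fo) list" and a1 a2 :: int
  assumes "wf_sig sig"
  shows "(\<exists>r::int. r \<ge> 0 \<and> (\<exists>S. finite S \<and> {a1, a2} \<subseteq> S \<and>
             (\<forall>f. hom_sub sig S f \<longrightarrow> \<bar>f a1 - f a2\<bar> \<le> r)))
       \<or> (\<exists>h. hom_QZ sig h \<and> fst (h a1) \<noteq> fst (h a2))"
proof (cases "\<exists>r::int. r \<ge> 0 \<and> (\<exists>S. finite S \<and> {a1, a2} \<subseteq> S \<and>
             (\<forall>f. hom_sub sig S f \<longrightarrow> \<bar>f a1 - f a2\<bar> \<le> r))")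
  case True then show ?thesis by blast
next
  case False
  have ex: "\<exists>f. hom_sub sig (Sm k \<union> {a1,a2}) f \<and> int k < \<bar>f a1 - f a2\<bar>" for k
  proof (rule ccontr)
    assume "\<not> ?thesis"
    then have "\<forall>f. hom_sub sig (Sm k \<union> {a1,a2}) f \<longrightarrow> \<bar>f a1 - f a2\<bar> \<le> int k" by (auto simp: not_less)
    moreover have "finite (Sm k \<union> {a1,a2})" by (simp add: Sm_fin)
    ultimately show False using False by (metis Un_upper2 of_nat_0_le_iff)
  qed
  define F where "F k = (SOME f. hom_sub sig (Sm k \<union> {a1,a2}) f \<and> int k < \<bar>f a1 - f a2\<bar>)" for k
  have Fk: "hom_sub sig (Sm k \<union> {a1,a2}) (F k) \<and> int k < \<bar>F k a1 - F k a2\<bar>" for k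
    unfolding F_def by (rule someI_ex[OF ex])
  define h where "h = H F"
  have homt: "sat qz_less \<phi> ((!) (map h t))"
    if sig: "(n, \<phi>) \<in> set sig" and len0: "length t = n" and sat0: "sat (<) \<phi> ((!) t)"
    for n \<phi> and t :: "int list"
  proof -
    have len: "n = length t" using len0 by simp
    have fvs: "fv \<phi> \<subseteq> {..<n}" using assms sig by (auto simp: wf_sig_def)
    obtain m where m: "set t \<subseteq> Sm m" using Sm_cover[of "set t"] by blast
    define I where "I = snd (st F m)"
    have inv: "Inv F (Sm m) h I" using H_inv by (simp add: I_def h_def)
    define N where "N = th (qd \<phi>)"
    define bad where "bad x y = (if fst (h x) < fst (h y) then {k\<in>I. F k y - F k x \<le> int N}
       else if fst (h y) < fst (h x) then {k\<in>I. - int N \<le> F k y - F k x} else {})" for x y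
    have fb: "finite (bad x y)" if "x \<in> Sm m" "y \<in> Sm m" for x y
    proof -
      have r: "rel (h x) (h y) (\<lambda>k. F k y - F k x) I" using inv that by (simp add: Inv_def)
      then show ?thesis unfolding bad_def rel_def tpos_def tneg_def
        by (auto split: if_splits)
    qed
    have finbad: "finite (\<Union>x\<in>set t. \<Union>y\<in>set t. bad x y)" using fb m by blast
    have infI: "infinite I" using inv by (simp add: Inv_def)
    obtain k where k: "k \<in> I" "k \<notin> (\<Union>x\<in>set t. \<Union>y\<in>set t. bad x y)" "m \<le> k"
      using infinite_avoid[OF infI finbad] by blast
    have "set t \<subseteq> Sm k \<union> {a1,a2}" using m Sm_mono[OF k(3)] by blast
    then have sat1: "sat (<) \<phi> ((!) (map (F k) t))"
      using Fk[of k] sig len sat0 unfolding hom_sub_def by blast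
    have sat2: "satD (range emb) \<phi> (emb \<circ> (!) (map (F k) t))" using sat1 sat_int by blast
    have key: "\<forall>i\<in>{..<n}. \<forall>j\<in>{..<n}. clamp N (emb (F k (t!i))) (emb (F k (t!j))) = clamp N (h (t!i)) (h (t!j))"
    proof (intro ballI)
      fix i j assume i: "i \<in> {..<n}" and j: "j \<in> {..<n}"
      define x where "x = t ! i"
      define y where "y = t ! j"
      have xy: "x \<in> Sm m" "y \<in> Sm m" "x \<in> set t" "y \<in> set t" using i j len m by (auto simp: x_def y_def)
      have r: "rel (h x) (h y) (\<lambda>k. F k y - F k x) I" using inv xy by (simp add: Inv_def)
      have kb: "k \<notin> bad x y" using k xy by blast
      have "clamp N (emb (F k x)) (emb (F k y)) = clamp N (h x) (h y)"
      proof (cases "fst (h x) = fst (h y)")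
        case True then show ?thesis using r k(1) by (simp add: rel_def clamp_def emb_def)
      next
        case False
        show ?thesis
        proof (cases "fst (h x) < fst (h y)")
          case True
          then have "int N < F k y - F k x" using kb k(1) by (simp add: bad_def)
          then show ?thesis using True by (simp add: clamp_def emb_def cl_def)
        next
          case False2: False
          then have "fst (h y) < fst (h x)" using False by simp
          then have "F k y - F k x < - int N" using kb k(1) False2 by (simp add: bad_def)
          then show ?thesis using False False2 by (simp add: clamp_def emb_def cl_def)
        qed
      qed
      then show "clamp N (emb (F k (t!i))) (emb (F k (t!j))) = clamp N (h (t!i)) (h (t!j))"
        by (simp add: x_def y_def)
    qed
    have pat: "pattern N {..<n} (emb \<circ> (!) (map (F k) t)) ((!) (map h t))"
      unfolding pattern_def using key len by simp
    have "satD (range emb) \<phi> (emb \<circ> (!) (map (F k) t)) = satD UNIV \<phi> ((!) (map h t))"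
      by (rule EF[OF good_emb good_UNIV fvs _ _ _ pat]) (auto simp: N_def)
    then show "sat qz_less \<phi> ((!) (map h t))" using sat2 sat_qz by simp
  qed
  have hom: "hom_QZ sig h" unfolding hom_QZ_def using homt by blast
  have "fst (h a1) \<noteq> fst (h a2)"
  proof
    assume eq: "fst (h a1) = fst (h a2)"
    obtain m where m: "{a1, a2} \<subseteq> Sm m" using Sm_cover[of "{a1,a2}"] by blast
    define I where "I = snd (st F m)"
    have inv: "Inv F (Sm m) h I" using H_inv by (simp add: I_def h_def)
    then have r: "rel (h a1) (h a2) (\<lambda>k. F k a2 - F k a1) I" using m by (simp add: Inv_def)
    then have c: "\<forall>k\<in>I. F k a2 - F k a1 = snd (h a2) - snd (h a1)" using eq by (simp add: rel_def)
    have infI: "infinite I" using inv by (simp add: Inv_def)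
    obtain k where k: "k \<in> I" "nat \<bar>snd (h a2) - snd (h a1)\<bar> \<le> k"
      using infinite_avoid[OF infI finite.emptyI] by blast
    have "int k < \<bar>F k a1 - F k a2\<bar>" using Fk by blast
    also have "\<dots> = \<bar>snd (h a2) - snd (h a1)\<bar>" using c k(1) by (metis abs_minus_commute)
    finally show False using k(2) by linarith
  qed
  then show ?thesis using hom by blast
qed

end
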